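(* Let $(E,\rho)$ be a complete partial $v$-generalized metric space and let $S:E\to E$ satisfy $\rho(Su,Sw)\le\lambda\max\{\rho(u,w),\rho(u,Su),\rho(w,Sw)\}$ for all $u,w\in E$, where $\lambda\in[0,1)$. Then $S$ has a unique fixed point $b\in E$, and $\rho(b,b)=0$.
   Context: Let $E$ be a nonempty set and $v\in\mathbb{N}$. $(E,\rho)$, with $\rho:E\times E\to[0,\infty)$, is a partial $v$-generalized metric space if for all $u,w,z_1,\dots,z_v\in E$: (1) $u=w$ iff $\rho(u,u)=\rho(u,w)=\rho(w,w)$; (2) $\rho(u,u)\le\rho(u,w)$; (3) $\rho(u,w)=\rho(w,u)$; (4) $\rho(u,w)\le\rho(u,z_1)+\rho(z_1,z_2)+\dots+\rho(z_{v-1},z_v)+\rho(z_v,w)-\sum_{i=1}^v\rho(z_i,z_i)$. A sequence $\{u_n\}$ in $E$ converges to $u\in E$ if $\lim_{n\to\infty}\rho(u_n,u)=\rho(u,u)$; it is Cauchy if $\lim_{n,m\to\infty}\rho(u_n,u_m)$ exists and is finite. $(E,\rho)$ is complete if for every Cauchy sequence $\{u_n\}$ there is $u\in E$ with $\lim_{n,m\to\infty}\rho(u_n,u_m)=\lim_{n\to\infty}\rho(u_n,u)=\rho(u,u)$. *)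

theory Defs
  imports "HOL-Analysis.Analysis"
begin

definition partial_vgen_metric :: "'a set \<Rightarrow> nat \<Rightarrow> ('a \<Rightarrow> 'a \<Rightarrow> real) \<Rightarrow> bool" where
  "partial_vgen_metric E v \<rho> \<longleftrightarrow>
     E \<noteq> {} \<and> v \<ge> 1 \<and>
     (\<forall>u\<in>E. \<forall>w\<in>E. \<rho> u w \<ge> 0) \<and>
     (\<forall>u\<in>E. \<forall>w\<in>E. u = w \<longleftrightarrow> (\<rho> u u = \<rho> u w \<and> \<rho> u w = \<rho> w w)) \<and>
     (\<forall>u\<in>E. \<forall>w\<in>E. \<rho> u u \<le> \<rho> u w) \<and>
     (\<forall>u\<in>E. \<forall>w\<in>E. \<rho> u w = \<rho> w u) \<and>
     (\<forall>u\<in>E. \<forall>w\<in>E. \<forall>z. (\<forall>i\<in>{1..v}. z i \<in> E) \<longrightarrow>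
        \<rho> u w \<le> \<rho> u (z 1) + (\<Sum>i=1..<v. \<rho> (z i) (z (Suc i))) + \<rho> (z v) w
                  - (\<Sum>i=1..v. \<rho> (z i) (z i)))"

definition pvg_cauchy :: "('a \<Rightarrow> 'a \<Rightarrow> real) \<Rightarrow> (nat \<Rightarrow> 'a) \<Rightarrow> bool" where
  "pvg_cauchy \<rho> u \<longleftrightarrow> (\<exists>L::real. ((\<lambda>(n,m). \<rho> (u n) (u m)) \<longlongrightarrow> L) (sequentially \<times>\<^sub>F sequentially))"

definition pvg_complete :: "'a set \<Rightarrow> ('a \<Rightarrow> 'a \<Rightarrow> real) \<Rightarrow> bool" where
  "pvg_complete E \<rho> \<longleftrightarrow>
     (\<forall>u. (\<forall>n. u n \<in> E) \<and> pvg_cauchy \<rho> u \<longrightarrow>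
        (\<exists>x\<in>E. ((\<lambda>(n,m). \<rho> (u n) (u m)) \<longlongrightarrow> \<rho> x x) (sequentially \<times>\<^sub>F sequentially)
               \<and> ((\<lambda>n. \<rho> (u n) x) \<longlonglongrightarrow> \<rho> x x)))"

end

theory Submission
  imports Defs
begin

lemma pvg_unfold:
  assumes "partial_vgen_metric E v \<rho>"
  shows "E \<noteq> {}" "v \<ge> 1" "\<forall>u\<in>E. \<forall>w\<in>E. \<rho> u w \<ge> 0"
    "\<forall>u\<in>E. \<forall>w\<in>E. u = w \<longleftrightarrow> (\<rho> u u = \<rho> u w \<and> \<rho> u w = \<rho> w w)"
    "\<forall>u\<in>E. \<forall>w\<in>E. \<rho> u u \<le> \<rho> u w"
    "\<forall>u\<in>E. \<forall>w\<in>E. \<rho> u w = \<rho> w u"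
    "\<forall>u\<in>E. \<forall>w\<in>E. \<forall>z. (\<forall>i\<in>{1..v}. z i \<in> E) \<longrightarrow>
        \<rho> u w \<le> \<rho> u (z 1) + (\<Sum>i=1..<v. \<rho> (z i) (z (Suc i))) + \<rho> (z v) w
                  - (\<Sum>i=1..v. \<rho> (z i) (z i))"
  using assms unfolding partial_vgen_metric_def apply -
  apply (elim conjE, assumption)+
  done

lemma pvg_tri:
  assumes "partial_vgen_metric E v \<rho>" "u \<in> E" "w \<in> E" "y \<in> E"
  shows "\<rho> u w \<le> \<rho> u y + \<rho> y w - \<rho> y y"
proof -
  have v1: "v \<ge> 1" using pvg_unfold(2)[OF assms(1)] .
  have "\<rho> u w \<le> \<rho> u ((\<lambda>_. y) 1) + (\<Sum>i=1..<v. \<rho> ((\<lambda>_. y) i) ((\<lambda>_. y) (Suc i))) + \<rho> ((\<lambda>_. y) v) w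
                  - (\<Sum>i=1..v. \<rho> ((\<lambda>_. y) i) ((\<lambda>_. y) i))"
    using pvg_unfold(7)[OF assms(1), rule_format, of u w "\<lambda>_. y"] assms(2-4) by simp
  moreover have "(\<Sum>i=1..<v. \<rho> y y) = real (v - 1) * \<rho> y y" by simp
  moreover have "(\<Sum>i=1..v. \<rho> y y) = real v * \<rho> y y" by simp
  moreover have "real v * \<rho> y y = real (v - 1) * \<rho> y y + \<rho> y y"
    using v1 by (simp add: of_nat_diff algebra_simps)
  ultimately show ?thesis by simp
qed

lemma geom_bound:
  fixes lam :: real
  assumes "0 \<le> lam" "lam < 1"
  shows "(\<Sum>i<K. lam^i) \<le> 1 / (1 - lam)"
proof -
  have "1 - lam^K = (1 - lam) * (\<Sum>i<K. lam^i)" by (rule one_diff_power_eq)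
  moreover have "lam^K \<ge> 0" using assms by simp
  ultimately have "(1 - lam) * (\<Sum>i<K. lam^i) \<le> 1" by linarith
  thus ?thesis using assms by (simp add: field_simps)
qed

lemma self_contr:
  fixes r lam :: real
  assumes "0 \<le> r" "r \<le> lam * r" "lam < 1"
  shows "r = 0"
proof -
  have "(1 - lam) * r \<le> 0" using assms(2) by (simp add: algebra_simps)
  hence "r \<le> 0" using assms(3) by (simp add: mult_le_0_iff)
  thus ?thesis using assms(1) by simp
qed

theorem mainTheorem7:
  fixes E :: "'a set" and v :: nat and \<rho> :: "'a \<Rightarrow> 'a \<Rightarrow> real"
    and S :: "'a \<Rightarrow> 'a" and lam :: real
  assumes "partial_vgen_metric E v \<rho>"
    and "pvg_complete E \<rho>"
    and "\<forall>u\<in>E. S u \<in> E"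
    and "0 \<le> lam" and "lam < 1"
    and "\<forall>u\<in>E. \<forall>w\<in>E. \<rho> (S u) (S w) \<le> lam * Max {\<rho> u w, \<rho> u (S u), \<rho> w (S w)}"
  shows "\<exists>b\<in>E. S b = b \<and> \<rho> b b = 0 \<and> (\<forall>c\<in>E. S c = c \<longrightarrow> c = b)"
proof -
  note M = pvg_unfold[OF assms(1)]
  have nn: "\<And>u w. u \<in> E \<Longrightarrow> w \<in> E \<Longrightarrow> \<rho> u w \<ge> 0" using M(3) by blast
  have eqax: "\<And>u w. u \<in> E \<Longrightarrow> w \<in> E \<Longrightarrow> \<rho> u u = \<rho> u w \<Longrightarrow> \<rho> u w = \<rho> w w \<Longrightarrow> u = w"
    using M(4) by blast
  have small: "\<And>u w. u \<in> E \<Longrightarrow> w \<in> E \<Longrightarrow> \<rho> u u \<le> \<rho> u w" using M(5) by blast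
  have sym: "\<And>u w. u \<in> E \<Longrightarrow> w \<in> E \<Longrightarrow> \<rho> u w = \<rho> w u" using M(6) by blast
  have tri: "\<And>u w y. u \<in> E \<Longrightarrow> w \<in> E \<Longrightarrow> y \<in> E \<Longrightarrow> \<rho> u w \<le> \<rho> u y + \<rho> y w - \<rho> y y"
    using pvg_tri[OF assms(1)] by blast
  have SE: "\<And>u. u \<in> E \<Longrightarrow> S u \<in> E" using assms(3) by blast
  have contr: "\<And>u w. u \<in> E \<Longrightarrow> w \<in> E \<Longrightarrow> \<rho> (S u) (S w) \<le> lam * max (\<rho> u w) (max (\<rho> u (S u)) (\<rho> w (S w)))"
    using assms(6) by simp
  obtain x0 where x0: "x0 \<in> E" using M(1) by blast
  define x where "x n = (S ^^ n) x0" for n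
  have xE: "\<And>n. x n \<in> E" unfolding x_def by (induct_tac n) (auto simp: x0 SE)
  have xS: "\<And>n. x (Suc n) = S (x n)" unfolding x_def by simp
  define d where "d n = \<rho> (x n) (x (Suc n))" for n
  have dnn: "\<And>n. d n \<ge> 0" unfolding d_def using nn xE by blast
  have dstep: "d (Suc n) \<le> lam * d n" for n
  proof -
    have "d (Suc n) \<le> lam * max (d n) (max (d n) (d (Suc n)))"
      using contr[OF xE xE, of n "Suc n"] unfolding d_def xS by simp
    show ?thesis
    proof (cases "d n \<le> d (Suc n)")
      case True
      hence "d (Suc n) \<le> lam * d (Suc n)" using \<open>d (Suc n) \<le> _\<close> by (simp add: max_def)
      hence "(1 - lam) * d (Suc n) \<le> 0" by (simp add: algebra_simps)
      hence "d (Suc n) \<le> 0" using assms(5) by (simp add: mult_le_0_iff)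
      thus ?thesis using assms(4) dnn[of n] by (smt (verit) mult_nonneg_nonneg)
    next
      case False
      thus ?thesis using \<open>d (Suc n) \<le> _\<close> by (simp add: max_def)
    qed
  qed
  have dpow: "d n \<le> lam^n * d 0" for n
  proof (induct n)
    case (Suc n)
    have "d (Suc n) \<le> lam * d n" by (rule dstep)
    also have "\<dots> \<le> lam * (lam^n * d 0)" using Suc assms(4) by (rule mult_left_mono)
    finally show ?case by simp
  qed simp
  define C where "C = d 0 / (1 - lam)"
  have chain: "\<rho> (x n) (x (n + Suc k)) \<le> (\<Sum>i<Suc k. d (n + i))" for n k
  proof (induct k)
    case 0 then show ?case by (simp add: d_def)
  next
    case (Suc k)
    have "\<rho> (x n) (x (n + Suc (Suc k))) \<le> \<rho> (x n) (x (n + Suc k)) + \<rho> (x (n + Suc k)) (x (n + Suc (Suc k))) - \<rho> (x (n + Suc k)) (x (n + Suc k))"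
      using tri xE by blast
    moreover have "\<rho> (x (n + Suc k)) (x (n + Suc k)) \<ge> 0" using nn xE by blast
    moreover have "\<rho> (x (n + Suc k)) (x (n + Suc (Suc k))) = d (n + Suc k)" by (simp add: d_def)
    ultimately show ?case using Suc by simp
  qed
  have bnd1: "\<rho> (x n) (x (n + Suc k)) \<le> lam^n * C" for n k
  proof -
    have "(\<Sum>i<Suc k. d (n + i)) \<le> (\<Sum>i<Suc k. lam^n * d 0 * lam^i)"
      by (rule sum_mono) (metis dpow power_add mult.commute mult.left_commute)
    also have "\<dots> = lam^n * d 0 * (\<Sum>i<Suc k. lam^i)" by (rule sum_distrib_left[symmetric])
    also have "\<dots> \<le> lam^n * d 0 * (1 / (1 - lam))"
      by (rule mult_left_mono[OF geom_bound]) (use assms(4,5) dnn in auto)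
    finally show ?thesis using chain[of n k] by (simp add: C_def)
  qed
  have bnd: "\<rho> (x n) (x m) \<le> lam^(min n m) * C" for n m
  proof -
    have diag: "\<rho> (x n) (x n) \<le> lam^n * C" for n
    proof -
      have "\<rho> (x n) (x n) \<le> \<rho> (x n) (x (n + Suc 0))" using small xE by blast
      also have "\<dots> \<le> lam^n * C" by (rule bnd1)
      finally show ?thesis .
    qed
    show ?thesis
    proof (cases n m rule: linorder_cases)
      case less
      define k where "k = m - Suc n"
      have m: "m = n + Suc k" using less unfolding k_def by simp
      have "\<rho> (x n) (x (n + Suc k)) \<le> lam^n * C" by (rule bnd1)
      moreover have "min n m = n" using less by simp
      ultimately show ?thesis using m by simp
    next
      case equal then show ?thesis using diag by simp
    next
      case greater
      define k where "k = n - Suc m"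
      have n: "n = m + Suc k" using greater unfolding k_def by simp
      have "\<rho> (x m) (x (m + Suc k)) \<le> lam^m * C" by (rule bnd1)
      moreover have "min n m = m" using greater by simp
      moreover have "\<rho> (x n) (x m) = \<rho> (x m) (x n)" using sym xE by blast
      ultimately show ?thesis using n by simp
    qed
  qed
  have C0: "C \<ge> 0" unfolding C_def using dnn[of 0] assms(5) by simp
  have lim0: "(\<lambda>N. lam^N * C) \<longlonglongrightarrow> 0"
    using LIMSEQ_power_zero[of lam] assms(4,5) by (intro tendsto_mult_left_zero) simp
  have cauchy0: "((\<lambda>(n,m). \<rho> (x n) (x m)) \<longlongrightarrow> 0) (sequentially \<times>\<^sub>F sequentially)"
  proof (rule tendstoI)
    fix e :: real assume e: "e > 0"
    from lim0 e obtain N where N: "\<And>n. n \<ge> N \<Longrightarrow> dist (lam^n * C) 0 < e"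
      unfolding lim_sequentially by blast
    show "\<forall>\<^sub>F p in sequentially \<times>\<^sub>F sequentially. dist ((\<lambda>(n,m). \<rho> (x n) (x m)) p) 0 < e"
      unfolding eventually_prod_sequentially
    proof (intro exI allI impI)
      fix m n assume "m \<ge> N" "n \<ge> N"
      have "lam^(min n m) \<le> lam^N"
        using assms(4,5) \<open>m \<ge> N\<close> \<open>n \<ge> N\<close> by (intro power_decreasing) auto
      hence "lam^(min n m) * C \<le> lam^N * C" using C0 by (rule mult_right_mono)
      moreover have "lam^N * C < e" using N[of N] C0 assms(4) by simp
      ultimately show "dist ((\<lambda>(n,m). \<rho> (x n) (x m)) (n, m)) 0 < e"
        using bnd[of n m] nn[OF xE xE, of n m] by simp
    qed
  qed
  then have "pvg_cauchy \<rho> x" unfolding pvg_cauchy_def by blast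
  then obtain b where bE: "b \<in> E"
    and b1: "((\<lambda>(n,m). \<rho> (x n) (x m)) \<longlongrightarrow> \<rho> b b) (sequentially \<times>\<^sub>F sequentially)"
    and b2: "(\<lambda>n. \<rho> (x n) b) \<longlonglongrightarrow> \<rho> b b"
    using assms(2) xE unfolding pvg_complete_def by blast
  have bb: "\<rho> b b = 0" using tendsto_unique[OF _ b1 cauchy0] by (simp add: prod_filter_eq_bot)
  have r0: "\<rho> b (S b) = 0"
  proof (rule ccontr)
    let ?r = "\<rho> b (S b)"
    assume "?r \<noteq> 0"
    hence rpos: "?r > 0" using nn[OF bE SE[OF bE]] by simp
    define e where "e = ?r * (1 - lam) / 4"
    have e: "e > 0" unfolding e_def using rpos assms(5) by simp
    have ev1: "\<forall>\<^sub>F n in sequentially. \<rho> (x n) b < e"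
      using b2[unfolded bb] e by (auto dest: order_tendstoD(2))
    have dC: "d 0 \<le> C" unfolding C_def using dnn[of 0] assms(4,5)
      by (simp add: le_divide_eq mult_nonneg_nonneg algebra_simps)
    have dnC: "d n \<le> lam^n * C" for n
      using dpow[of n] mult_left_mono[OF dC, of "lam^n"] assms(4) by simp
    have ev2: "\<forall>\<^sub>F n in sequentially. d n < e"
    proof -
      have "\<forall>\<^sub>F n in sequentially. lam^n * C < e" using lim0 e by (auto dest: order_tendstoD(2))
      thus ?thesis by eventually_elim (use dnC in \<open>rule le_less_trans\<close>)
    qed
    have ev3: "\<forall>\<^sub>F n in sequentially. \<rho> (x (Suc n)) b < e"
      using ev1 by (rule eventually_sequentially_Suc[THEN iffD2])
    obtain N1 where N1: "\<And>n. n \<ge> N1 \<Longrightarrow> \<rho> (x n) b < e \<and> d n < e \<and> \<rho> (x (Suc n)) b < e"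
      using eventually_conj[OF ev1 eventually_conj[OF ev2 ev3]] unfolding eventually_sequentially by blast
    define N where "N = N1"
    have N: "\<rho> (x N) b < e" "d N < e" and N2: "\<rho> (x (Suc N)) b < e" using N1[of N1] unfolding N_def by auto
    have "?r \<le> \<rho> b (x (Suc N)) + \<rho> (x (Suc N)) (S b) - \<rho> (x (Suc N)) (x (Suc N))"
      using tri bE SE xE by blast
    also have "\<dots> \<le> \<rho> b (x (Suc N)) + \<rho> (x (Suc N)) (S b)" using nn[OF xE xE, of "Suc N" "Suc N"] by linarith
    also have "\<rho> (x (Suc N)) (S b) \<le> lam * max (\<rho> (x N) b) (max (d N) ?r)"
      using contr[OF xE bE, of N] by (simp add: xS d_def)
    also have "\<dots> \<le> lam * (e + ?r)"
      using N e rpos assms(4) by (intro mult_left_mono) auto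
    finally have "?r \<le> e + lam * (e + ?r)" using N2 sym[OF bE xE, of "Suc N"] by simp
    hence "?r * (1 - lam) \<le> e * (1 + lam)" by (simp add: algebra_simps)
    also have "\<dots> \<le> 2 * e" using e assms(5) by simp
    also have "\<dots> < ?r * (1 - lam)" unfolding e_def using rpos assms(5) by simp
    finally show False by simp
  qed
  have Sbb: "\<rho> (S b) (S b) = 0"
    using small[OF SE[OF bE] bE] sym[OF bE SE[OF bE]] r0 nn[OF SE[OF bE] SE[OF bE]] by simp
  have fixb: "S b = b" using eqax[OF bE SE[OF bE]] bb r0 Sbb by simp
  have uniq: "c = b" if cE: "c \<in> E" and Sc: "S c = c" for c
  proof -
    have "\<rho> c c \<le> lam * \<rho> c c" using contr[OF cE cE] Sc by simp
    hence cc: "\<rho> c c = 0" using nn[OF cE cE] assms(5)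
      by (intro self_contr) auto
    have "\<rho> c b \<le> lam * \<rho> c b" using contr[OF cE bE] Sc fixb cc bb nn[OF cE bE] by simp
    hence cb: "\<rho> c b = 0" using nn[OF cE bE] assms(4,5)
      by (intro self_contr) auto
    show ?thesis using eqax[OF cE bE] cc cb bb by simp
  qed
  show ?thesis using bE fixb bb uniq by blast
qed

end
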